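(* Let $q$ be an odd prime power, $f$ a normal planar function on $\mathbb F_{q^2}$, and $\theta\in\mathbb F_{q^2}^*$ such that for every $c\in\mathbb F_q$, $\#\{x\in\mathbb F_{q^2}:\theta_1f_0(x)-\theta_0f_1(x)=c\}$ equals $q+1$ if $c\neq0$ and $1$ if $c=0$, so that $\mathcal U_\theta:=\{(x,t\theta):x\in\mathbb F_{q^2},t\in\mathbb F_q\}\cup\{(\infty)\}$ is a unital in $\Pi(f)$. Then in $\mathcal U_\theta$ the point $(\infty)$ is a vertex of Wilbrink's condition II in strong form.
   Context: A function $f:\mathbb F_{q^2}\to\mathbb F_{q^2}$ is planar if for every $a\neq0$ the map $x\mapsto f(x+a)-f(x)$ is a bijection; it is normal if moreover $f(0)=0$ and $f(a)=f(b)$ iff $a=\pm b$. For planar $f$, $\Pi(f)$ is the projective plane with points $(x,y)\in\mathbb F_{q^2}^2$ and $(a)$ for $a\in\mathbb F_{q^2}\cup\{\infty\}$, lines $L_{a,b}=\{(x,f(x+a)-b):x\in\mathbb F_{q^2}\}\cup\{(a)\}$, $N_a=\{(a,y):y\in\mathbb F_{q^2}\}\cup\{(\infty)\}$ ($a,b\in\mathbb F_{q^2}$), $L_\infty=\{(a):a\in\mathbb F_{q^2}\cup\{\infty\}\}$. A fixed $\xi\in\mathbb F_{q^2}\setminus\mathbb F_q$ is chosen; $\theta=\theta_0+\theta_1\xi$, $f(x)=f_0(x)+f_1(x)\xi$ with components in $\mathbb F_q$. A unital (set of $q^3+1$ points meeting every line in $1$ or $q+1$ points) is regarded as a design whose blocks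 are its intersections with lines meeting it in $q+1$ points. A point $v$ of the unital is a vertex of Wilbrink's condition II in strong form if for every block $B$ with $v\notin B$, every block $C$ with $v\in C$ meeting $B$, and every point $w\in C$ distinct from $v$ and from the point of $B\cap C$, there exists a block $B'\neq C$ with $w\in B'$ such that $B'$ meets every block that contains $v$ and meets $B$. *)

theory Defs
  imports "HOL-Computational_Algebra.Primes"
begin

text \<open>Points of the projective plane Pi(f): affine points (x,y) and points at
infinity (a), where None stands for (infinity) and Some a for a in F_{q^2}.\<close>
datatype 'a point = Aff 'a 'a | Inf "'a option"

definition odd_prime_power :: "nat \<Rightarrow> bool" where
  "odd_prime_power q \<longleftrightarrow> odd q \<and> (\<exists>p k. prime p \<and> k > 0 \<and> q = p ^ k)"

definition Fq :: "nat \<Rightarrow> 'a::field set" where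
  "Fq q = {x. x ^ q = x}"

definition planar :: "('a::field \<Rightarrow> 'a) \<Rightarrow> bool" where
  "planar f \<longleftrightarrow> (\<forall>a. a \<noteq> 0 \<longrightarrow> bij (\<lambda>x. f (x + a) - f x))"

definition normal_planar :: "('a::field \<Rightarrow> 'a) \<Rightarrow> bool" where
  "normal_planar f \<longleftrightarrow> planar f \<and> f 0 = 0 \<and> (\<forall>a b. f a = f b \<longleftrightarrow> a = b \<or> a = - b)"

definition comp :: "nat \<Rightarrow> 'a::field \<Rightarrow> 'a \<Rightarrow> 'a \<times> 'a" where
  "comp q \<xi> y = (THE (a, b). a \<in> Fq q \<and> b \<in> Fq q \<and> y = a + b * \<xi>)"

definition comp0 :: "nat \<Rightarrow> 'a::field \<Rightarrow> 'a \<Rightarrow> 'a" where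
  "comp0 q \<xi> y = fst (comp q \<xi> y)"

definition comp1 :: "nat \<Rightarrow> 'a::field \<Rightarrow> 'a \<Rightarrow> 'a" where
  "comp1 q \<xi> y = snd (comp q \<xi> y)"

definition line_L :: "('a::field \<Rightarrow> 'a) \<Rightarrow> 'a \<Rightarrow> 'a \<Rightarrow> 'a point set" where
  "line_L f a b = {Aff x (f (x + a) - b) | x. True} \<union> {Inf (Some a)}"

definition line_N :: "'a \<Rightarrow> 'a point set" where
  "line_N a = {Aff a y | y. True} \<union> {Inf None}"

definition line_inf :: "'a point set" where
  "line_inf = range Inf"

definition plane_lines :: "('a::field \<Rightarrow> 'a) \<Rightarrow> 'a point set set" where
  "plane_lines f = {line_L f a b | a b. True} \<union> {line_N a | a. True} \<union> {line_inf}"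

definition U_theta :: "nat \<Rightarrow> 'a::field \<Rightarrow> 'a point set" where
  "U_theta q \<theta> = {Aff x (t * \<theta>) | x t. t \<in> Fq q} \<union> {Inf None}"

definition unital_blocks :: "nat \<Rightarrow> ('a::field \<Rightarrow> 'a) \<Rightarrow> 'a point set \<Rightarrow> 'a point set set" where
  "unital_blocks q f U = {U \<inter> l | l. l \<in> plane_lines f \<and> card (U \<inter> l) = q + 1}"

definition wilbrink_II_strong_vertex :: "'p set set \<Rightarrow> 'p \<Rightarrow> bool" where
  "wilbrink_II_strong_vertex Bs v \<longleftrightarrow>
     (\<forall>B\<in>Bs. v \<notin> B \<longrightarrow>
       (\<forall>C\<in>Bs. v \<in> C \<longrightarrow> B \<inter> C \<noteq> {} \<longrightarrow>
         (\<forall>w\<in>C. w \<noteq> v \<longrightarrow> w \<notin> B \<inter> C \<longrightarrow>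
           (\<exists>B'\<in>Bs. B' \<noteq> C \<and> w \<in> B' \<and>
              (\<forall>D\<in>Bs. v \<in> D \<longrightarrow> D \<inter> B \<noteq> {} \<longrightarrow> D \<inter> B' \<noteq> {})))))"

end

theory Submission
  imports Defs "HOL-Number_Theory.Residues"
begin

lemma Fq_char:
  assumes "odd_prime_power q" and "card (UNIV :: 'a::{field,finite} set) = q ^ 2"
  shows "\<exists>k. q = CHAR('a) ^ k \<and> odd q"
proof -
  obtain p k where p: "prime p" "k > 0" "q = p ^ k" and oq: "odd q"
    using assms(1) unfolding odd_prime_power_def by blast
  have pos: "CHAR('a) > 0" by (rule finite_imp_CHAR_pos) simp
  have pc: "prime CHAR('a)" using prime_CHAR_semidom[OF pos] .
  have "CHAR('a) dvd p ^ (k * 2)"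
    using CHAR_dvd_CARD[where 'a='a] assms(2) p by (simp add: power_mult)
  hence "CHAR('a) dvd p" using pc prime_dvd_power by blast
  hence "CHAR('a) = p" using pc p(1) primes_dvd_imp_eq by blast
  thus ?thesis using p oq by blast
qed

lemma Fq_add:
  assumes "odd_prime_power q" and "card (UNIV :: 'a::{field,finite} set) = q ^ 2"
    and "s \<in> Fq q" "t \<in> Fq q"
  shows "s + t \<in> Fq q" and "(- s :: 'a) \<in> Fq q"
proof -
  obtain k where k: "q = CHAR('a) ^ k" and oq: "odd q" using Fq_char[OF assms(1,2)] by blast
  have pos: "CHAR('a) > 0" by (rule finite_imp_CHAR_pos) simp
  have pc: "prime CHAR('a)" using prime_CHAR_semidom[OF pos] .
  have "(s + t) ^ q = s ^ q + t ^ q" using freshmans_dream'[OF pc k] .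
  thus "s + t \<in> Fq q" using assms(3,4) by (simp add: Fq_def)
  have "(- s) ^ q = - (s ^ q)" using oq by (simp add: power_minus_odd)
  thus "- s \<in> Fq q" using assms(3) by (simp add: Fq_def)
qed

lemma mem_L: "Aff x y \<in> line_L f a b \<longleftrightarrow> y = f (x + a) - b"
  by (auto simp: line_L_def)

lemma inf_notin_L: "Inf None \<notin> line_L f a b"
  by (auto simp: line_L_def)

lemma mem_U: "Aff x y \<in> U_theta q \<theta> \<longleftrightarrow> (\<exists>t\<in>Fq q. y = t * \<theta>)"
  by (auto simp: U_theta_def)

lemma Inf_U: "Inf z \<in> U_theta q \<theta> \<longleftrightarrow> z = None"
  by (auto simp: U_theta_def)

theorem proposition3p8:
  fixes f :: "'a::{field,finite} \<Rightarrow> 'a" and q :: nat and \<xi> \<theta> :: 'a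
  assumes "odd_prime_power q"
    and "card (UNIV :: 'a set) = q ^ 2"
    and "\<xi> \<notin> Fq q"
    and "normal_planar f"
    and "\<theta> \<noteq> 0"
    and "\<forall>c\<in>Fq q.
           card {x. comp1 q \<xi> \<theta> * comp0 q \<xi> (f x) - comp0 q \<xi> \<theta> * comp1 q \<xi> (f x) = c}
             = (if c \<noteq> 0 then q + 1 else 1)"
  shows "wilbrink_II_strong_vertex (unital_blocks q f (U_theta q \<theta>)) (Inf None)"
  unfolding wilbrink_II_strong_vertex_def
proof (intro ballI impI)
  define U where "U = U_theta q \<theta>"
  have vU: "Inf None \<in> U" by (simp add: U_def Inf_U)
  fix B C w
  assume B: "B \<in> unital_blocks q f (U_theta q \<theta>)" and vB: "Inf None \<notin> B"
    and C: "C \<in> unital_blocks q f (U_theta q \<theta>)" and vC: "Inf None \<in> C"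
    and BC: "B \<inter> C \<noteq> {}" and wC: "w \<in> C" and wv: "w \<noteq> Inf None" and wBC: "w \<notin> B \<inter> C"
  obtain lB where lB: "lB \<in> plane_lines f" "B = U \<inter> lB" "card (U \<inter> lB) = q + 1"
    using B unfolding unital_blocks_def U_def by blast
  obtain a b where ab: "lB = line_L f a b"
    using lB vB vU unfolding plane_lines_def line_N_def line_inf_def by auto
  obtain lC where lC: "lC \<in> plane_lines f" "C = U \<inter> lC"
    using C unfolding unital_blocks_def U_def by blast
  obtain x0 t0 where w: "w = Aff x0 (t0 * \<theta>)" "t0 \<in> Fq q"
    using wC wv lC(2) unfolding U_def U_theta_def by auto
  have lCN: "lC = line_N x0"
    using lC vC wC w(1) unfolding plane_lines_def line_N_def line_inf_def line_L_def by auto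
  obtain p where p: "p \<in> B" "p \<in> C" using BC by blast
  obtain t1 where p1: "p = Aff x0 (t1 * \<theta>)" "t1 \<in> Fq q"
    using p vB lC(2) lCN unfolding U_def U_theta_def line_N_def by auto
  define s where "s = t0 + - t1"
  have s: "s \<in> Fq q" unfolding s_def using Fq_add[OF assms(1,2)] w(2) p1(2) by blast
  have ms: "- s \<in> Fq q" using Fq_add[OF assms(1,2) s s] by blast
  have Ushift: "Aff x (y + s * \<theta>) \<in> U \<longleftrightarrow> Aff x y \<in> U" for x y
  proof
    assume "Aff x (y + s * \<theta>) \<in> U"
    then obtain t where "t \<in> Fq q" "y + s * \<theta> = t * \<theta>" by (auto simp: U_def mem_U)
    hence "y = (t + - s) * \<theta>" by (simp add: algebra_simps)
    moreover have "t + - s \<in> Fq q" using Fq_add[OF assms(1,2) \<open>t \<in> Fq q\<close> ms] by blast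
    ultimately show "Aff x y \<in> U" by (auto simp: U_def mem_U)
  next
    assume "Aff x y \<in> U"
    then obtain t where "t \<in> Fq q" "y = t * \<theta>" by (auto simp: U_def mem_U)
    hence "y + s * \<theta> = (t + s) * \<theta>" by (simp add: algebra_simps)
    moreover have "t + s \<in> Fq q" using Fq_add[OF assms(1,2) \<open>t \<in> Fq q\<close> s] by blast
    ultimately show "Aff x (y + s * \<theta>) \<in> U" by (auto simp: U_def mem_U)
  qed
  define b' where "b' = b - s * \<theta>"
  define B' where "B' = U \<inter> line_L f a b'"
  define \<phi> where "\<phi> = (\<lambda>P. case P of Aff x y \<Rightarrow> Aff x (y + s * \<theta>) | Inf z \<Rightarrow> Inf z)"
  have Baff: "P \<in> U \<inter> line_L f a c \<Longrightarrow> \<exists>x y. P = Aff x y" for P c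
    by (cases P) (auto simp: U_def Inf_U inf_notin_L)
  have phiB: "\<phi> P \<in> B'" if PB: "P \<in> B" for P
  proof -
    obtain x y where P: "P = Aff x y" using Baff PB lB(2) ab by blast
    show ?thesis using PB P Ushift lB(2) ab
      by (auto simp: \<phi>_def B'_def b'_def mem_L)
  qed
  have inj: "inj \<phi>"
    unfolding inj_def \<phi>_def by (auto split: point.splits)
  have img: "\<phi> ` B = B'"
  proof
    show "\<phi> ` B \<subseteq> B'" using phiB by blast
    show "B' \<subseteq> \<phi> ` B"
    proof
      fix P assume P: "P \<in> B'"
      obtain x y where Pxy: "P = Aff x y" using Baff P unfolding B'_def by blast
      have PU: "Aff x y \<in> U" and yeq: "y = f (x + a) - b'" using P Pxy by (auto simp: B'_def mem_L)
      have "Aff x (y - s * \<theta>) \<in> U" using Ushift[of x "y - s * \<theta>"] PU by simp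
      moreover have "y - s * \<theta> = f (x + a) - b" using yeq by (simp add: b'_def)
      ultimately have "Aff x (y - s * \<theta>) \<in> B"
        using lB(2) ab by (simp add: mem_L)
      moreover have "\<phi> (Aff x (y - s * \<theta>)) = P" by (simp add: \<phi>_def Pxy)
      ultimately show "P \<in> \<phi> ` B" by force
    qed
  qed
  have cardB': "card B' = q + 1"
    using card_image[OF inj_on_subset[OF inj subset_UNIV, of B]] img lB by simp
  have B'bl: "B' \<in> unital_blocks q f (U_theta q \<theta>)"
    unfolding unital_blocks_def plane_lines_def
    using cardB' unfolding B'_def U_def by blast
  show "\<exists>B'\<in>unital_blocks q f (U_theta q \<theta>). B' \<noteq> C \<and> w \<in> B' \<and>
          (\<forall>D\<in>unital_blocks q f (U_theta q \<theta>). Inf None \<in> D \<longrightarrow> D \<inter> B \<noteq> {} \<longrightarrow> D \<inter> B' \<noteq> {})"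
  proof (intro bexI conjI ballI impI)
    show "B' \<noteq> C" using vC by (auto simp: B'_def inf_notin_L)
    have "\<phi> p = w" using p1 w by (simp add: \<phi>_def s_def algebra_simps)
    thus "w \<in> B'" using phiB p(1) by blast
    fix D assume D: "D \<in> unital_blocks q f (U_theta q \<theta>)" and vD: "Inf None \<in> D"
      and DB: "D \<inter> B \<noteq> {}"
    obtain lD where lD: "lD \<in> plane_lines f" "D = U \<inter> lD"
      using D unfolding unital_blocks_def U_def by blast
    obtain P where P: "P \<in> D" "P \<in> B" using DB by blast
    obtain x y where Pxy: "P = Aff x y" using Baff P(2) lB(2) ab by blast
    have lDN: "lD = line_N x"
      using lD vD P(1) Pxy unfolding plane_lines_def line_N_def line_inf_def line_L_def by auto
    have "\<phi> P \<in> D"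
      using Pxy P(1) Ushift lD(2) lDN by (auto simp: \<phi>_def line_N_def)
    thus "D \<inter> B' \<noteq> {}" using phiB P(2) by blast
  qed (rule B'bl)
qed

end
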